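(* Let $r\ge3$. For every $P\in\mathbf W_{N,r}$, $$\pi(-P)\,E^{(r-1)}_{N,r}=\pi(P)\,F_{N,r}.$$
   Context: For integers $N,r\ge1$ let $S_{N,r}=\{(n_1,\dots,n_r)\in\mathbb Z^r:\ n_1+\dots+n_r=N,\ \text{each } n_i\ge3 \text{ odd}\}$; when used as an index set it is ordered lexicographically decreasingly. For $m=(m_1,\dots,m_r)$ and $n=(n_1,\dots,n_r)$ let $\delta\binom{m}{n}=1$ if $m_i=n_i$ for all $i$, and $0$ otherwise. $\mathbf V_{N,r}$ is the $\mathbb Q$-span of the monomials $x_1^{n_1-1}\cdots x_r^{n_r-1}$ with $(n_1,\dots,n_r)\in S_{N,r}$. $\mathsf{Vect}_{N,r}=\mathbb Q^{S_{N,r}}$ (row vectors), and $\pi:\mathbf V_{N,r}\to\mathsf{Vect}_{N,r}$ is the isomorphism sending $\sum a_{n_1,\dots,n_r}x_1^{n_1-1}\cdots x_r^{n_r-1}$ to $(a_{n_1,\dots,n_r})_{(n_1,\dots,n_r)\in S_{N,r}}$. For $r\ge2$, $\mathbf W_{N,r}=\{P\in\mathbf V_{N,r}: P(x_1,\dots,x_r)=P(x_2-x_1,x_2,x_3,\dots,x_r)-P(x_2-x_1,x_1,x_3,\dots,x_r)\}$. Ihara action: for $f\in\mathbb Q[t]$ and a polynomial $g$ in $r-1$ variables, $(f\mathbin{\underline\circ}g)(x_1,\dots,x_r)=f(x_1)g(x_2,\dots,x_r)+\sum_{i=1}^{r-1}\big(f(x_{i+1}-x_i)g(x_1,\dots,\widehat{x_{i+1}},\dots,x_r)-(-1)^{\deg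 f}f(x_i-x_{i+1})g(x_1,\dots,\widehat{x_i},\dots,x_r)\big)$ (hats denote omitted variables). For positive integers $m_i,n_i$, $e\binom{m_1,\dots,m_r}{n_1,\dots,n_r}$ is the coefficient of $x_1^{n_1-1}\cdots x_r^{n_r-1}$ in $t^{m_1-1}\mathbin{\underline\circ}\,(y_1^{m_2-1}\cdots y_{r-1}^{m_r-1})$. $E_{N,r}$ is the $S_{N,r}\times S_{N,r}$ matrix with $(m,n)$-entry $e\binom{m}{n}$. For $2\le j\le r$, $E^{(j)}_{N,r}$ is the $S_{N,r}\times S_{N,r}$ matrix with $(m,n)$-entry $\delta\binom{m_1,\dots,m_{r-j}}{n_1,\dots,n_{r-j}}\,e\binom{m_{r-j+1},\dots,m_r}{n_{r-j+1},\dots,n_r}$. $F_{N,r}=E_{N,r}-\mathrm{id}$. *)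

theory Defs
  imports Main "HOL-Library.Poly_Mapping" "HOL-Computational_Algebra.Polynomial"
begin

text \<open>Multivariate polynomials over Q: variables x_1, x_2, ... are represented by
  indices 0, 1, ...; a monomial is an exponent vector (a finitely supported nat-valued map).\<close>
type_synonym mpoly = "(nat \<Rightarrow>\<^sub>0 nat) \<Rightarrow>\<^sub>0 rat"

definition Var :: "nat \<Rightarrow> mpoly" where
  "Var i = Poly_Mapping.single (Poly_Mapping.single i 1) 1"

definition Const :: "rat \<Rightarrow> mpoly" where
  "Const c = Poly_Mapping.single 0 c"

definition subst :: "(nat \<Rightarrow> mpoly) \<Rightarrow> mpoly \<Rightarrow> mpoly" where
  "subst \<sigma> p = sum (\<lambda>a. Const (Poly_Mapping.lookup p a) * prod (\<lambda>i. \<sigma> i ^ Poly_Mapping.lookup a i) (Poly_Mapping.keys a)) (Poly_Mapping.keys p)"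

definition upoly_at :: "rat poly \<Rightarrow> mpoly \<Rightarrow> mpoly" where
  "upoly_at f q = (\<Sum>k\<le>degree f. Const (coeff f k) * q ^ k)"

definition expo :: "nat list \<Rightarrow> (nat \<Rightarrow>\<^sub>0 nat)" where
  "expo n = (\<Sum>i<length n. Poly_Mapping.single i (n ! i - 1))"

definition mono :: "nat list \<Rightarrow> mpoly" where
  "mono n = Poly_Mapping.single (expo n) 1"

definition S :: "nat \<Rightarrow> nat \<Rightarrow> nat list set" where
  "S N r = {n. length n = r \<and> sum_list n = N \<and> (\<forall>i<r. odd (n ! i) \<and> 3 \<le> n ! i)}"

definition V :: "nat \<Rightarrow> nat \<Rightarrow> mpoly set" where
  "V N r = {P. Poly_Mapping.keys P \<subseteq> expo ` S N r}"

definition W :: "nat \<Rightarrow> nat \<Rightarrow> mpoly set" where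
  "W N r = {P \<in> V N r.
     P = subst (\<lambda>i. if i = 0 then Var 1 - Var 0 else Var i) P
       - subst (\<lambda>i. if i = 0 then Var 1 - Var 0 else if i = 1 then Var 0 else Var i) P}"

definition piv :: "mpoly \<Rightarrow> nat list \<Rightarrow> rat" where
  "piv P n = Poly_Mapping.lookup P (expo n)"

text \<open>Ihara action t-circ: f in Q[t], g a polynomial in r-1 variables (x_1..x_{r-1}),
  the result is a polynomial in r variables x_1..x_r (indices 0..r-1).
  The sum index i ranges over 1..r-1 as in the paper (1-based x_i = Var (i-1)).\<close>
definition ihara :: "nat \<Rightarrow> rat poly \<Rightarrow> mpoly \<Rightarrow> mpoly" where
  "ihara r f g =
     upoly_at f (Var 0) * subst (\<lambda>j. Var (Suc j)) g
     + (\<Sum>i\<in>{1..r-1}.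
          upoly_at f (Var i - Var (i - 1)) * subst (\<lambda>j. if j < i then Var j else Var (Suc j)) g
        - (-1) ^ degree f * upoly_at f (Var (i - 1) - Var i)
            * subst (\<lambda>j. if j < i - 1 then Var j else Var (Suc j)) g)"

definition e :: "nat list \<Rightarrow> nat list \<Rightarrow> rat" where
  "e m n = Poly_Mapping.lookup (ihara (length m) (monom 1 (hd m - 1)) (mono (tl m))) (expo n)"

text \<open>Matrices indexed by S_{N,r} x S_{N,r}, as functions of (row, column).\<close>
definition Emat :: "nat list \<Rightarrow> nat list \<Rightarrow> rat" where
  "Emat m n = e m n"

definition Ej :: "nat \<Rightarrow> nat \<Rightarrow> nat list \<Rightarrow> nat list \<Rightarrow> rat" where
  "Ej r j m n = (if take (r - j) m = take (r - j) n then e (drop (r - j) m) (drop (r - j) n) else 0)"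

definition Fmat :: "nat list \<Rightarrow> nat list \<Rightarrow> rat" where
  "Fmat m n = Emat m n - (if m = n then 1 else 0)"

definition vecmat :: "nat \<Rightarrow> nat \<Rightarrow> (nat list \<Rightarrow> rat) \<Rightarrow> (nat list \<Rightarrow> nat list \<Rightarrow> rat) \<Rightarrow> nat list \<Rightarrow> rat" where
  "vecmat N r v M n = (\<Sum>m\<in>S N r. v m * M m n)"

end

theory Submission
  imports Defs
begin


lemma Const_0[simp]: "Const 0 = 0" by (simp add: Const_def)
lemma Const_1[simp]: "Const 1 = 1" by (simp add: Const_def)
lemma Const_add: "Const (a + b) = Const a + Const b" by (simp add: Const_def single_add)
lemma Const_mult: "Const (a * b) = Const a * Const b" by (simp add: Const_def mult_single)

lemma lookup_Const_mult: "Poly_Mapping.lookup (Const c * p) k = c * Poly_Mapping.lookup p k"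
proof -
  have "Const c * p = Poly_Mapping.map ((*) c) p"
    by (simp add: Const_def mult_map_scale_conv_mult)
  then show ?thesis by (simp add: map.rep_eq when_def)
qed

lemma keys_Const_mult: "Poly_Mapping.keys (Const c * p) \<subseteq> Poly_Mapping.keys p"
  by (auto simp: in_keys_iff lookup_Const_mult)

lemma single_Const: "Poly_Mapping.single a c = Const c * Poly_Mapping.single a 1"
  by (simp add: Const_def mult_single)

lemma poly_expand: "p = (\<Sum>a\<in>Poly_Mapping.keys p. Poly_Mapping.single a (Poly_Mapping.lookup p a))"
proof (rule poly_mapping_eqI)
  fix k
  show "Poly_Mapping.lookup p k = Poly_Mapping.lookup (\<Sum>a\<in>Poly_Mapping.keys p. Poly_Mapping.single a (Poly_Mapping.lookup p a)) k"
    by (cases "k \<in> Poly_Mapping.keys p") (simp_all add: lookup_sum lookup_single when_def in_keys_iff)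
qed

definition msub :: "(nat \<Rightarrow> mpoly) \<Rightarrow> (nat \<Rightarrow>\<^sub>0 nat) \<Rightarrow> mpoly" where
  "msub \<sigma> a = prod (\<lambda>i. \<sigma> i ^ Poly_Mapping.lookup a i) (Poly_Mapping.keys a)"

lemma msub_superset:
  assumes "finite I" "Poly_Mapping.keys a \<subseteq> I"
  shows "msub \<sigma> a = prod (\<lambda>i. \<sigma> i ^ Poly_Mapping.lookup a i) I"
  unfolding msub_def
  by (rule prod.mono_neutral_left) (use assms in \<open>auto simp: in_keys_iff\<close>)

lemma msub_add: "msub \<sigma> (a + b) = msub \<sigma> a * msub \<sigma> b"
proof -
  let ?I = "Poly_Mapping.keys a \<union> Poly_Mapping.keys b"
  have f: "finite ?I" by simp
  have "msub \<sigma> (a + b) = prod (\<lambda>i. \<sigma> i ^ Poly_Mapping.lookup (a+b) i) ?I"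
    by (rule msub_superset[OF f]) (rule keys_add)
  also have "\<dots> = prod (\<lambda>i. \<sigma> i ^ Poly_Mapping.lookup a i) ?I * prod (\<lambda>i. \<sigma> i ^ Poly_Mapping.lookup b i) ?I"
    by (simp add: lookup_add power_add prod.distrib)
  also have "\<dots> = msub \<sigma> a * msub \<sigma> b"
    by (simp add: msub_superset[OF f])
  finally show ?thesis .
qed

lemma msub_zero[simp]: "msub \<sigma> 0 = 1" by (simp add: msub_def)

lemma subst_superset:
  assumes "finite A" "Poly_Mapping.keys p \<subseteq> A"
  shows "subst \<sigma> p = (\<Sum>a\<in>A. Const (Poly_Mapping.lookup p a) * msub \<sigma> a)"
  unfolding subst_def msub_def[symmetric]
  by (rule sum.mono_neutral_left) (use assms in \<open>auto simp: in_keys_iff\<close>)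

lemma subst_add: "subst \<sigma> (p + q) = subst \<sigma> p + subst \<sigma> q"
proof -
  let ?I = "Poly_Mapping.keys p \<union> Poly_Mapping.keys q"
  have f: "finite ?I" by simp
  show ?thesis
    using keys_add[of p q]
    by (simp add: subst_superset[OF f] lookup_add Const_add distrib_right sum.distrib)
qed

lemma subst_zero[simp]: "subst \<sigma> 0 = 0" by (simp add: subst_def)

lemma subst_single: "subst \<sigma> (Poly_Mapping.single a c) = Const c * msub \<sigma> a"
  by (simp add: subst_def msub_def)

lemma subst_sum: "subst \<sigma> (sum f A) = (\<Sum>x\<in>A. subst \<sigma> (f x))"
  by (induction A rule: infinite_finite_induct) (simp_all add: subst_add)

lemma subst_uminus: "subst \<sigma> (- p) = - subst \<sigma> p"
  using subst_add[of \<sigma> "-p" p] by (simp add: eq_neg_iff_add_eq_0)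

lemma subst_diff: "subst \<sigma> (p - q) = subst \<sigma> p - subst \<sigma> q"
  using subst_add[of \<sigma> p "-q"] subst_uminus[of \<sigma> q] by simp

lemma subst_Const_mult: "subst \<sigma> (Const c * p) = Const c * subst \<sigma> p"
proof -
  have f: "finite (Poly_Mapping.keys p)" by simp
  show ?thesis
    by (simp add: subst_superset[OF f keys_Const_mult] subst_superset[OF f order_refl]
        lookup_Const_mult Const_mult sum_distrib_left mult.assoc)
qed

lemma subst_mult: "subst \<sigma> (p * q) = subst \<sigma> p * subst \<sigma> q"
proof -
  have "p * q = (\<Sum>a\<in>Poly_Mapping.keys p. \<Sum>b\<in>Poly_Mapping.keys q.
      Poly_Mapping.single a (Poly_Mapping.lookup p a) * Poly_Mapping.single b (Poly_Mapping.lookup q b))"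
    by (subst poly_expand[of p], subst poly_expand[of q]) (simp add: sum_product)
  then have "subst \<sigma> (p * q) = (\<Sum>a\<in>Poly_Mapping.keys p. \<Sum>b\<in>Poly_Mapping.keys q.
      (Const (Poly_Mapping.lookup p a) * msub \<sigma> a) * (Const (Poly_Mapping.lookup q b) * msub \<sigma> b))"
    by (simp add: subst_sum mult_single subst_single msub_add Const_mult ac_simps)
  also have "\<dots> = subst \<sigma> p * subst \<sigma> q"
    by (simp add: subst_def msub_def sum_product)
  finally show ?thesis .
qed

lemma subst_one[simp]: "subst \<sigma> 1 = 1"
  by (simp add: subst_def msub_def)

lemma subst_power: "subst \<sigma> (p ^ k) = subst \<sigma> p ^ k"
  by (induction k) (simp_all add: subst_mult)

lemma subst_prod: "subst \<sigma> (prod f A) = (\<Prod>x\<in>A. subst \<sigma> (f x))"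
  by (induction A rule: infinite_finite_induct) (simp_all add: subst_mult)

lemma subst_Const[simp]: "subst \<sigma> (Const c) = Const c"
  using subst_single[of \<sigma> 0 c] by (simp add: Const_def)

lemma subst_Var[simp]: "subst \<sigma> (Var i) = \<sigma> i"
  by (simp add: Var_def subst_single msub_def)

lemma subst_comp: "subst \<sigma> (subst \<tau> p) = subst (\<lambda>i. subst \<sigma> (\<tau> i)) p"
proof -
  have m: "subst \<sigma> (msub \<tau> a) = msub (\<lambda>i. subst \<sigma> (\<tau> i)) a" for a
    by (simp add: msub_def subst_prod subst_power)
  show ?thesis
    unfolding subst_def[of \<tau>] msub_def[symmetric]
    by (simp add: subst_sum subst_mult m) (simp add: subst_def msub_def)
qed



lemma lookup_expo: "Poly_Mapping.lookup (expo n) i = (if i < length n then n!i - 1 else 0)"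
  by (auto simp: expo_def lookup_sum lookup_single when_def)

lemma keys_expo: "Poly_Mapping.keys (expo n) \<subseteq> {..<length n}"
  by (auto simp: in_keys_iff lookup_expo split: if_splits)

lemma subst_mono: "subst \<sigma> (mono n) = (\<Prod>i<length n. \<sigma> i ^ (n!i - 1))"
proof -
  have "subst \<sigma> (mono n) = msub \<sigma> (expo n)" by (simp add: mono_def subst_single)
  also have "\<dots> = (\<Prod>i<length n. \<sigma> i ^ Poly_Mapping.lookup (expo n) i)"
    by (rule msub_superset[OF _ keys_expo]) simp
  also have "\<dots> = (\<Prod>i<length n. \<sigma> i ^ (n!i - 1))"
    by (rule prod.cong) (auto simp: lookup_expo)
  finally show ?thesis .
qed

lemma Var_pow: "Var i ^ k = Poly_Mapping.single (Poly_Mapping.single i k) 1"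
  by (induction k) (simp_all add: Var_def mult_single single_add[symmetric] add.commute)

lemma prod_single: "(\<Prod>i\<in>I. Poly_Mapping.single (f i) (1::rat)) = Poly_Mapping.single (\<Sum>i\<in>I. f i) 1"
  by (induction I rule: infinite_finite_induct) (simp_all add: mult_single)

lemma subst_Var_mono: "subst Var (mono n) = mono n"
  by (simp only: subst_mono Var_pow prod_single) (simp add: mono_def expo_def)

lemma expo_inj:
  assumes "length m = length n" "\<forall>i<length m. m!i \<ge> 1" "\<forall>i<length n. n!i \<ge> 1" "expo m = expo n"
  shows "m = n"
proof (rule nth_equalityI)
  show "length m = length n" by fact
  fix i assume i: "i < length m"
  have "Poly_Mapping.lookup (expo m) i = Poly_Mapping.lookup (expo n) i" using assms(4) by simp
  then show "m!i = n!i" using i assms(1-3) by (simp add: lookup_expo) (metis One_nat_def Suc_pred' less_eq_Suc_le)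
qed

lemma S_finite: "finite (S N r)"
proof -
  have "S N r \<subseteq> {xs. set xs \<subseteq> {..N} \<and> length xs = r}"
    by (auto simp: S_def elem_le_sum_list in_set_conv_nth)
  moreover have "finite {xs. set xs \<subseteq> {..N} \<and> length xs = r}"
    by (rule finite_lists_length_eq) simp
  ultimately show ?thesis by (rule finite_subset)
qed

lemma S_inj: "m \<in> S N r \<Longrightarrow> n \<in> S N r \<Longrightarrow> expo m = expo n \<Longrightarrow> m = n"
  by (rule expo_inj) (auto simp: S_def)

lemma V_expand:
  assumes "P \<in> V N r"
  shows "P = (\<Sum>m\<in>S N r. Const (piv P m) * mono m)"
proof (rule poly_mapping_eqI)
  fix k
  have L: "Poly_Mapping.lookup (\<Sum>m\<in>S N r. Const (piv P m) * mono m) k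
     = (\<Sum>m\<in>S N r. if expo m = k then piv P m else 0)"
    by (simp add: lookup_sum lookup_Const_mult mono_def lookup_single when_def) (rule sum.cong; simp)
  show "Poly_Mapping.lookup P k = Poly_Mapping.lookup (\<Sum>m\<in>S N r. Const (piv P m) * mono m) k"
  proof (cases "k \<in> expo ` S N r")
    case True
    then obtain m0 where m0: "m0 \<in> S N r" "k = expo m0" by auto
    have "(\<Sum>m\<in>S N r. if expo m = k then piv P m else 0) = (\<Sum>m\<in>S N r. if m = m0 then piv P m else 0)"
      by (rule sum.cong) (use m0 S_inj in auto)
    also have "\<dots> = piv P m0" using m0 S_finite by simp
    finally show ?thesis using L m0 by (simp add: piv_def)
  next
    case False
    then have "k \<notin> Poly_Mapping.keys P" using assms by (auto simp: V_def)
    moreover have "(\<Sum>m\<in>S N r. if expo m = k then piv P m else 0) = 0"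
      by (rule sum.neutral) (use False in auto)
    ultimately show ?thesis using L by (simp add: in_keys_iff)
  qed
qed

lemma subst_V:
  assumes "P \<in> V N r"
  shows "subst \<sigma> P = (\<Sum>m\<in>S N r. Const (piv P m) * (\<Prod>i<r. \<sigma> i ^ (m!i - 1)))"
  apply (subst V_expand[OF assms])
  apply (simp add: subst_sum subst_Const_mult subst_mono)
  apply (rule sum.cong, simp)
  apply (simp add: S_def)
  done

lemma subst_Var_V: assumes "P \<in> V N r" shows "subst Var P = P"
proof -
  let ?Q = "\<Sum>m\<in>S N r. Const (piv P m) * mono m"
  have e: "P = ?Q" by (rule V_expand[OF assms])
  have "subst Var P = subst Var ?Q" by (rule arg_cong[OF e])
  also have "\<dots> = ?Q" by (simp add: subst_sum subst_Const_mult subst_Var_mono)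
  finally show ?thesis using e by simp
qed

lemma subst_neg0:
  assumes "P \<in> V N r" "\<sigma>' 0 = - \<sigma> 0" "\<And>k. k \<noteq> 0 \<Longrightarrow> \<sigma>' k = \<sigma> k"
  shows "subst \<sigma>' P = subst \<sigma> P"
proof -
  have "(\<Prod>i<r. \<sigma>' i ^ (m!i - 1)) = (\<Prod>i<r. \<sigma> i ^ (m!i - 1))" if "m \<in> S N r" for m
  proof (rule prod.cong)
    fix i assume i: "i \<in> {..<r}"
    show "\<sigma>' i ^ (m!i - 1) = \<sigma> i ^ (m!i - 1)"
    proof (cases "i = 0")
      case True
      have "odd (m!0)" using that i True by (auto simp: S_def)
      then have "even (m!0 - 1)" by simp
      then show ?thesis using True assms(2) by (simp add: power_minus_even)
    qed (simp add: assms(3))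
  qed simp
  then show ?thesis by (simp add: subst_V[OF assms(1)])
qed



definition swp :: "nat \<Rightarrow> nat" where "swp k = (if k = 0 then 1 else if k = 1 then 0 else k)"

lemma W_swap:
  assumes "P \<in> W N r"
  shows "subst (\<lambda>k. Var (swp k)) P = - P"
proof -
  let ?A = "\<lambda>i. if i = 0 then Var 1 - Var 0 else Var i"
  let ?B = "\<lambda>i::nat. if i = 0 then Var 1 - Var 0 else if i = 1 then Var 0 else Var i"
  let ?Sw = "\<lambda>k. Var (swp k)"
  have V: "P \<in> V N r" and Weq: "P = subst ?A P - subst ?B P" using assms by (auto simp: W_def)
  have "subst ?Sw P = subst ?Sw (subst ?A P - subst ?B P)" by (rule arg_cong[OF Weq])
  also have "\<dots> = subst (\<lambda>i. subst ?Sw (?A i)) P - subst (\<lambda>i. subst ?Sw (?B i)) P"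
    by (simp add: subst_diff subst_comp)
  also have "subst (\<lambda>i. subst ?Sw (?A i)) P = subst ?B P"
    by (rule subst_neg0[OF V]) (auto simp: subst_diff swp_def)
  also have "subst (\<lambda>i. subst ?Sw (?B i)) P = subst ?A P"
    by (rule subst_neg0[OF V]) (auto simp: subst_diff swp_def)
  finally have "subst ?Sw P = subst ?B P - subst ?A P" .
  also have "\<dots> = - (subst ?A P - subst ?B P)" by simp
  also have "\<dots> = - P" by (simp only: Weq[symmetric])
  finally show ?thesis .
qed

lemma W_antisym:
  assumes "P \<in> W N r"
  shows "subst (\<lambda>k. \<sigma> (swp k)) P + subst \<sigma> P = 0"
proof -
  have "subst (\<lambda>k. \<sigma> (swp k)) P = subst \<sigma> (subst (\<lambda>k. Var (swp k)) P)"
    by (simp add: subst_comp)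
  also have "\<dots> = - subst \<sigma> P"
    by (simp add: W_swap[OF assms] subst_uminus)
  finally show ?thesis by simp
qed



lemma upoly_at_monom: "upoly_at (monom 1 d) q = q ^ d"
proof -
  have "upoly_at (monom 1 d) q = (\<Sum>k\<le>d. if k = d then q ^ k else 0)"
    unfolding upoly_at_def by (rule sum.cong) (auto simp: degree_monom_eq coeff_monom)
  then show ?thesis by simp
qed

lemma subst_mono_cons:
  assumes "m \<noteq> []"
  shows "subst \<sigma> (mono m) = \<sigma> 0 ^ (hd m - 1) * subst (\<lambda>j. \<sigma> (Suc j)) (mono (tl m))"
proof (cases m)
  case (Cons x l)
  show ?thesis unfolding subst_mono Cons
    by (simp add: prod.lessThan_Suc_shift del: prod.lessThan_Suc)
qed (use assms in simp)

definition al :: "nat \<Rightarrow> nat \<Rightarrow> mpoly" where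
  "al i k = (if k = 0 then Var i - Var (i-1) else if k - 1 < i then Var (k-1) else Var k)"
definition be :: "nat \<Rightarrow> nat \<Rightarrow> mpoly" where
  "be i k = (if k = 0 then Var i - Var (i-1) else if k - 1 < i - 1 then Var (k-1) else Var k)"

lemma Phi_mono:
  assumes "length m = r" "r \<ge> 1" "even (hd m - 1)"
  shows "ihara r (monom 1 (hd m - 1)) (mono (tl m))
    = subst Var (mono m) + (\<Sum>i\<in>{1..r-1}. subst (al i) (mono m) - subst (be i) (mono m))"
proof -
  have ne: "m \<noteq> []" using assms by auto
  let ?d = "hd m - 1"
  have a: "subst (al i) (mono m) = (Var i - Var (i-1)) ^ ?d * subst (\<lambda>j. if j < i then Var j else Var (Suc j)) (mono (tl m))" for i
  proof -
    have "(\<lambda>j. al i (Suc j)) = (\<lambda>j. if j < i then Var j else Var (Suc j))" by (auto simp: al_def)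
    then show ?thesis by (simp add: subst_mono_cons[OF ne] al_def)
  qed
  have b: "subst (be i) (mono m) = (-1) ^ ?d * (Var (i-1) - Var i) ^ ?d * subst (\<lambda>j. if j < i - 1 then Var j else Var (Suc j)) (mono (tl m))" for i
  proof -
    have "(\<lambda>j. be i (Suc j)) = (\<lambda>j. if j < i - 1 then Var j else Var (Suc j))" by (auto simp: be_def)
    moreover have "(Var (i-1) - Var i) ^ ?d = (Var i - Var (i-1)) ^ ?d"
      using power_minus_even[OF assms(3), of "Var i - Var (i-1)"] by simp
    ultimately show ?thesis using assms(3) by (simp add: subst_mono_cons[OF ne] be_def)
  qed
  have c: "subst Var (mono m) = Var 0 ^ ?d * subst (\<lambda>j. Var (Suc j)) (mono (tl m))"
    by (simp add: subst_mono_cons[OF ne])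
  show ?thesis
    unfolding ihara_def upoly_at_monom degree_monom_eq[OF one_neq_zero] a b c
    by (simp add: mult.assoc)
qed

definition shft :: "mpoly \<Rightarrow> mpoly" where "shft = subst (\<lambda>j. Var (Suc j))"
definition lift :: "(nat \<Rightarrow> mpoly) \<Rightarrow> nat \<Rightarrow> mpoly" where
  "lift \<tau> k = (if k = 0 then Var 0 else shft (\<tau> (k - 1)))"

lemma lift_mono:
  assumes "m \<noteq> []"
  shows "Var 0 ^ (hd m - 1) * shft (subst \<tau> (mono (tl m))) = subst (lift \<tau>) (mono m)"
proof -
  have "(\<lambda>j. lift \<tau> (Suc j)) = (\<lambda>j. shft (\<tau> j))" by (auto simp: lift_def)
  then show ?thesis
    by (simp add: subst_mono_cons[OF assms] lift_def shft_def subst_comp)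
qed

lemma Psi_mono:
  assumes "length m = r" "r \<ge> 2" "even (hd (tl m) - 1)"
  shows "Var 0 ^ (hd m - 1) * shft (ihara (r - 1) (monom 1 (hd (tl m) - 1)) (mono (tl (tl m))))
    = subst Var (mono m) + (\<Sum>i\<in>{1..r-2}. subst (lift (al i)) (mono m) - subst (lift (be i)) (mono m))"
proof -
  have ne: "m \<noteq> []" using assms by auto
  have "ihara (r - 1) (monom 1 (hd (tl m) - 1)) (mono (tl (tl m)))
    = subst Var (mono (tl m)) + (\<Sum>i\<in>{1..r-1-1}. subst (al i) (mono (tl m)) - subst (be i) (mono (tl m)))"
    by (rule Phi_mono) (use assms in auto)
  moreover have "r - 1 - 1 = r - 2" by simp
  moreover have sh: "shft (p + q) = shft p + shft q" "shft (p - q) = shft p - shft q"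
      "shft (sum f A) = (\<Sum>x\<in>A. shft (f x))" for p q and f :: "nat \<Rightarrow> mpoly" and A
    by (simp_all add: shft_def subst_add subst_diff subst_sum)
  moreover have "subst Var (mono m) = Var 0 ^ (hd m - 1) * shft (subst Var (mono (tl m)))"
    by (simp add: shft_def subst_mono_cons[OF ne] subst_Var_mono)
  ultimately show ?thesis
    by (simp add: distrib_left right_diff_distrib sum_distrib_left lift_mono[OF ne, simplified])
qed



lemma subst_V2:
  assumes "P \<in> V N r"
  shows "subst \<sigma> P = (\<Sum>m\<in>S N r. Const (piv P m) * subst \<sigma> (mono m))"
proof -
  let ?Q = "\<Sum>m\<in>S N r. Const (piv P m) * mono m"
  have e: "P = ?Q" by (rule V_expand[OF assms])
  have "subst \<sigma> P = subst \<sigma> ?Q" by (rule arg_cong[OF e])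
  also have "\<dots> = (\<Sum>m\<in>S N r. Const (piv P m) * subst \<sigma> (mono m))"
    by (simp add: subst_sum subst_Const_mult)
  finally show ?thesis .
qed

lemma S_props: "m \<in> S N r \<Longrightarrow> length m = r \<and> (\<forall>i<r. odd (m!i) \<and> 3 \<le> m!i)"
  by (simp add: S_def)

lemma lift_al: "i \<ge> 1 \<Longrightarrow> lift (al i) = (\<lambda>k. al (Suc i) (swp k))"
  apply (rule ext)
  apply (auto simp: lift_def al_def swp_def shft_def subst_diff)
  apply (subgoal_tac "Suc (k - Suc (Suc 0)) = k - Suc 0")
   apply simp
  apply arith
  done

lemma lift_be: "i \<ge> 1 \<Longrightarrow> lift (be i) = (\<lambda>k. be (Suc i) (swp k))"
  apply (rule ext)
  apply (auto simp: lift_def be_def swp_def shft_def subst_diff)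
  apply (subgoal_tac "Suc (k - Suc (Suc 0)) = k - Suc 0")
   apply simp
  apply arith
  done

lemma main_identity:
  assumes W: "P \<in> W N r" and r: "r \<ge> 3"
  shows "(\<Sum>m\<in>S N r. Const (piv P m) * ihara r (monom 1 (hd m - 1)) (mono (tl m)))
       + (\<Sum>m\<in>S N r. Const (piv P m) * (Var 0 ^ (hd m - 1) * shft (ihara (r - 1) (monom 1 (hd (tl m) - 1)) (mono (tl (tl m))))))
       = P"
proof -
  have V: "P \<in> V N r" using W by (simp add: W_def)
  define f where "f i = subst (al i) P - subst (be i) P" for i
  have hd_eq: "hd m = m!0" "hd (tl m) = m!1" if "m \<in> S N r" for m
  proof -
    have l: "length m = r" using S_props[OF that] by simp
    then have "m \<noteq> []" "tl m \<noteq> []" using r by (auto simp: length_0_conv[symmetric] simp del: length_0_conv)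
    then show "hd m = m!0" "hd (tl m) = m!1" by (cases m; simp add: hd_conv_nth)+
  qed
  have Phi: "(\<Sum>m\<in>S N r. Const (piv P m) * ihara r (monom 1 (hd m - 1)) (mono (tl m)))
      = subst Var P + (\<Sum>i\<in>{1..r-1}. f i)"
  proof -
    have "(\<Sum>m\<in>S N r. Const (piv P m) * ihara r (monom 1 (hd m - 1)) (mono (tl m)))
       = (\<Sum>m\<in>S N r. Const (piv P m) * (subst Var (mono m) + (\<Sum>i\<in>{1..r-1}. subst (al i) (mono m) - subst (be i) (mono m))))"
    proof (rule sum.cong)
      fix m assume m: "m \<in> S N r"
      show "Const (piv P m) * ihara r (monom 1 (hd m - 1)) (mono (tl m)) =
        Const (piv P m) * (subst Var (mono m) + (\<Sum>i\<in>{1..r-1}. subst (al i) (mono m) - subst (be i) (mono m)))"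
        using S_props[OF m] r hd_eq[OF m] by (subst Phi_mono) auto
    qed simp
    also have "\<dots> = subst Var P + (\<Sum>i\<in>{1..r-1}. f i)"
      by (simp add: f_def subst_V2[OF V] distrib_left right_diff_distrib sum_distrib_left
          sum.distrib sum_subtractf sum.swap[of _ _ "S N r"])
    finally show ?thesis .
  qed
  have Psi: "(\<Sum>m\<in>S N r. Const (piv P m) * (Var 0 ^ (hd m - 1) * shft (ihara (r - 1) (monom 1 (hd (tl m) - 1)) (mono (tl (tl m))))))
      = subst Var P + (\<Sum>i\<in>{1..r-2}. subst (lift (al i)) P - subst (lift (be i)) P)"
  proof -
    have "(\<Sum>m\<in>S N r. Const (piv P m) * (Var 0 ^ (hd m - 1) * shft (ihara (r - 1) (monom 1 (hd (tl m) - 1)) (mono (tl (tl m))))))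
       = (\<Sum>m\<in>S N r. Const (piv P m) * (subst Var (mono m) + (\<Sum>i\<in>{1..r-2}. subst (lift (al i)) (mono m) - subst (lift (be i)) (mono m))))"
    proof (rule sum.cong)
      fix m assume m: "m \<in> S N r"
      show "Const (piv P m) * (Var 0 ^ (hd m - 1) * shft (ihara (r - 1) (monom 1 (hd (tl m) - 1)) (mono (tl (tl m))))) =
        Const (piv P m) * (subst Var (mono m) + (\<Sum>i\<in>{1..r-2}. subst (lift (al i)) (mono m) - subst (lift (be i)) (mono m)))"
        using S_props[OF m] r hd_eq[OF m] by (subst Psi_mono) auto
    qed simp
    also have "\<dots> = subst Var P + (\<Sum>i\<in>{1..r-2}. subst (lift (al i)) P - subst (lift (be i)) P)"
      by (simp add: subst_V2[OF V] distrib_left right_diff_distrib sum_distrib_left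
          sum.distrib sum_subtractf sum.swap[of _ _ "S N r"])
    finally show ?thesis .
  qed
  have Psi2: "(\<Sum>i\<in>{1..r-2}. subst (lift (al i)) P - subst (lift (be i)) P) = - (\<Sum>i\<in>{1..r-2}. f (Suc i))"
  proof -
    have "(\<Sum>i\<in>{1..r-2}. subst (lift (al i)) P - subst (lift (be i)) P) = (\<Sum>i\<in>{1..r-2}. - f (Suc i))"
    proof (rule sum.cong)
      fix i assume "i \<in> {1..r-2}"
      then have i: "i \<ge> 1" by simp
      have "subst (lift (al i)) P = - subst (al (Suc i)) P"
        using W_antisym[OF W, of "al (Suc i)"] lift_al[OF i] by (simp add: eq_neg_iff_add_eq_0)
      moreover have "subst (lift (be i)) P = - subst (be (Suc i)) P"
        using W_antisym[OF W, of "be (Suc i)"] lift_be[OF i] by (simp add: eq_neg_iff_add_eq_0)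
      ultimately show "subst (lift (al i)) P - subst (lift (be i)) P = - f (Suc i)"
        by (simp add: f_def)
    qed simp
    then show ?thesis by (simp add: sum_negf)
  qed
  have f1: "f 1 = - P"
  proof -
    have "al 1 = (\<lambda>i. if i = 0 then Var 1 - Var 0 else if i = 1 then Var 0 else Var i)"
      by (rule ext) (auto simp: al_def)
    moreover have "be 1 = (\<lambda>i. if i = 0 then Var 1 - Var 0 else Var i)"
      by (rule ext) (auto simp: be_def)
    ultimately have "f 1 = - (subst (\<lambda>i. if i = 0 then Var 1 - Var 0 else Var i) P
       - subst (\<lambda>i. if i = 0 then Var 1 - Var 0 else if i = 1 then Var 0 else Var i) P)"
      by (simp add: f_def)
    also have "\<dots> = - P" using W by (simp only: W_def mem_Collect_eq)
    finally show ?thesis .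
  qed
  have split1: "(\<Sum>i\<in>{1..r-1}. f i) = f 1 + (\<Sum>i\<in>{2..r-1}. f i)"
    using r by (subst sum.atLeast_Suc_atMost) (auto simp: numeral_2_eq_2)
  have split2: "(\<Sum>i\<in>{1..r-2}. f (Suc i)) = (\<Sum>i\<in>{2..r-1}. f i)"
  proof -
    have "{2..r-1} = {Suc 1..Suc (r-2)}" using r by auto
    then show ?thesis by (simp only: sum.shift_bounds_cl_Suc_ivl)
  qed
  show ?thesis
    unfolding Phi Psi Psi2 split1 split2 f1 subst_Var_V[OF V] by simp
qed



definition up :: "(nat \<Rightarrow>\<^sub>0 nat) \<Rightarrow> (nat \<Rightarrow>\<^sub>0 nat)" where
  "up a = (\<Sum>i\<in>Poly_Mapping.keys a. Poly_Mapping.single (Suc i) (Poly_Mapping.lookup a i))"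

lemma lookup_up: "Poly_Mapping.lookup (up a) j = (if j = 0 then 0 else Poly_Mapping.lookup a (j - 1))"
proof (cases j)
  case (Suc j')
  have "Poly_Mapping.lookup (up a) j = (\<Sum>i\<in>Poly_Mapping.keys a. if i = j' then Poly_Mapping.lookup a i else 0)"
    unfolding up_def lookup_sum Suc by (rule sum.cong) (auto simp: lookup_single when_def)
  also have "\<dots> = Poly_Mapping.lookup a j'" by (auto simp: in_keys_iff)
  finally show ?thesis using Suc by simp
qed (simp add: up_def lookup_sum lookup_single)

lemma shft_expand: "shft Q = (\<Sum>a\<in>Poly_Mapping.keys Q. Poly_Mapping.single (up a) (Poly_Mapping.lookup Q a))"
proof -
  have "msub (\<lambda>j. Var (Suc j)) a = Poly_Mapping.single (up a) 1" for a
    by (simp add: msub_def Var_pow prod_single up_def)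
  then show ?thesis
    by (simp add: shft_def subst_def msub_def[symmetric] single_Const[symmetric])
qed

lemma lookup_expo_Suc: "Poly_Mapping.lookup (expo n) (Suc j) = Poly_Mapping.lookup (expo (tl n)) j"
  by (cases n) (simp_all add: lookup_expo)

lemma lookup_expo_0: "n \<noteq> [] \<Longrightarrow> Poly_Mapping.lookup (expo n) 0 = hd n - 1"
  by (cases n) (simp_all add: lookup_expo)

lemma key_eq:
  assumes "n \<noteq> []"
  shows "(Poly_Mapping.single 0 d + up a = expo n) \<longleftrightarrow> (d = hd n - 1 \<and> a = expo (tl n))"
proof
  assume h: "Poly_Mapping.single 0 d + up a = expo n"
  have "Poly_Mapping.lookup (Poly_Mapping.single 0 d + up a) 0 = Poly_Mapping.lookup (expo n) 0"
    using h by simp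
  then have "d = hd n - 1" by (simp add: lookup_add lookup_up lookup_expo_0[OF assms])
  moreover have "a = expo (tl n)"
  proof (rule poly_mapping_eqI)
    fix j
    have "Poly_Mapping.lookup (Poly_Mapping.single 0 d + up a) (Suc j) = Poly_Mapping.lookup (expo n) (Suc j)"
      using h by simp
    then show "Poly_Mapping.lookup a j = Poly_Mapping.lookup (expo (tl n)) j"
      by (simp add: lookup_add lookup_up lookup_expo_Suc lookup_single)
  qed
  ultimately show "d = hd n - 1 \<and> a = expo (tl n)" ..
next
  assume h: "d = hd n - 1 \<and> a = expo (tl n)"
  show "Poly_Mapping.single 0 d + up a = expo n"
  proof (rule poly_mapping_eqI)
    fix j
    show "Poly_Mapping.lookup (Poly_Mapping.single 0 d + up a) j = Poly_Mapping.lookup (expo n) j"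
      using h by (cases j) (simp_all add: lookup_add lookup_up lookup_expo_Suc lookup_single lookup_expo_0[OF assms])
  qed
qed

lemma coef_shift:
  assumes "n \<noteq> []"
  shows "Poly_Mapping.lookup (Var 0 ^ d * shft Q) (expo n)
     = (if d = hd n - 1 then Poly_Mapping.lookup Q (expo (tl n)) else 0)"
proof -
  have "Var 0 ^ d * shft Q = (\<Sum>a\<in>Poly_Mapping.keys Q. Poly_Mapping.single (Poly_Mapping.single 0 d + up a) (Poly_Mapping.lookup Q a))"
    by (simp add: shft_expand Var_pow sum_distrib_left mult_single)
  then have "Poly_Mapping.lookup (Var 0 ^ d * shft Q) (expo n)
     = (\<Sum>a\<in>Poly_Mapping.keys Q. if d = hd n - 1 \<and> a = expo (tl n) then Poly_Mapping.lookup Q a else 0)"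
    by (simp add: lookup_sum lookup_single when_def key_eq[OF assms])
  also have "\<dots> = (if d = hd n - 1 then Poly_Mapping.lookup Q (expo (tl n)) else 0)"
    by (auto simp: in_keys_iff)
  finally show ?thesis .
qed



theorem lemma4p9:
  fixes N r :: nat and P :: mpoly
  assumes "N \<ge> 1" and "r \<ge> 3" and "P \<in> W N r"
  shows "\<forall>n\<in>S N r. vecmat N r (piv (- P)) (Ej r (r - 1)) n = vecmat N r (piv P) Fmat n"
proof
  fix n assume n: "n \<in> S N r"
  have r: "r \<ge> 3" by fact
  define Phi where "Phi m = ihara r (monom 1 (hd m - 1)) (mono (tl m))" for m
  define Psi where "Psi m = Var 0 ^ (hd m - 1) * shft (ihara (r - 1) (monom 1 (hd (tl m) - 1)) (mono (tl (tl m))))" for m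
  have nn: "n \<noteq> []" "length n = r" "hd n \<ge> 3" using S_props[OF n] r
    by (auto simp: hd_conv_nth simp flip: length_greater_0_conv)
  have Ejeq: "Ej r (r - 1) m n = Poly_Mapping.lookup (Psi m) (expo n)" if m: "m \<in> S N r" for m
  proof -
    have mm: "m \<noteq> []" "length m = r" "hd m \<ge> 3" using S_props[OF m] r
      by (auto simp: hd_conv_nth simp flip: length_greater_0_conv)
    have rr: "r - (r - 1) = 1" using r by simp
    have t: "take 1 m = take 1 n \<longleftrightarrow> hd m = hd n" using mm nn
      by (cases m; cases n) auto
    have hh: "hd m - 1 = hd n - 1 \<longleftrightarrow> hd m = hd n" using mm nn by auto
    show ?thesis
      unfolding Ej_def rr t Psi_def coef_shift[OF nn(1)] hh
      by (simp add: e_def drop_Suc mm)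
  qed
  have Eeq: "Emat m n = Poly_Mapping.lookup (Phi m) (expo n)" if m: "m \<in> S N r" for m
    using S_props[OF m] by (simp add: Emat_def e_def Phi_def)
  have ident: "Poly_Mapping.lookup (\<Sum>m\<in>S N r. Const (piv P m) * Phi m) (expo n)
       + Poly_Mapping.lookup (\<Sum>m\<in>S N r. Const (piv P m) * Psi m) (expo n) = piv P n"
    using arg_cong[OF main_identity[OF assms(3) r], of "\<lambda>p. Poly_Mapping.lookup p (expo n)"]
    by (simp add: Phi_def Psi_def lookup_add piv_def)
  have L: "vecmat N r (piv (- P)) (Ej r (r - 1)) n = - Poly_Mapping.lookup (\<Sum>m\<in>S N r. Const (piv P m) * Psi m) (expo n)"
  proof -
    have "vecmat N r (piv (- P)) (Ej r (r - 1)) n = (\<Sum>m\<in>S N r. - (piv P m * Poly_Mapping.lookup (Psi m) (expo n)))"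
      unfolding vecmat_def by (rule sum.cong) (simp_all add: Ejeq[simplified] piv_def)
    then show ?thesis unfolding lookup_sum lookup_Const_mult by (simp add: sum_negf)
  qed
  have R: "vecmat N r (piv P) Fmat n = Poly_Mapping.lookup (\<Sum>m\<in>S N r. Const (piv P m) * Phi m) (expo n) - piv P n"
  proof -
    have "vecmat N r (piv P) Fmat n = (\<Sum>m\<in>S N r. piv P m * Emat m n) - (\<Sum>m\<in>S N r. if m = n then piv P m else 0)"
      unfolding vecmat_def Fmat_def by (simp add: right_diff_distrib sum_subtractf) (rule sum.cong; simp)
    also have "(\<Sum>m\<in>S N r. if m = n then piv P m else 0) = piv P n" using n S_finite by simp
    also have "(\<Sum>m\<in>S N r. piv P m * Emat m n) = Poly_Mapping.lookup (\<Sum>m\<in>S N r. Const (piv P m) * Phi m) (expo n)"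
      unfolding lookup_sum lookup_Const_mult by (rule sum.cong) (simp_all add: Eeq)
    finally show ?thesis .
  qed
  show "vecmat N r (piv (- P)) (Ej r (r - 1)) n = vecmat N r (piv P) Fmat n"
    unfolding L R using ident by (simp add: algebra_simps)
qed


end
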